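(* Let $f\colon\prod_{i\in[n]}X_i\to Y$ satisfy condition (BC), and let $\varphi_k\colon X_k\to Y$ ($k\in[n]$) be maps satisfying the boundary condition. The following are equivalent: (i) $\Phi_k^-\le\varphi_k\le\Phi_k^+$ (pointwise) for all $k\in[n]$; (ii) $f(\mathbf{x})=p_0(\varphi_1(x_1),\ldots,\varphi_n(x_n))$ for all $\mathbf{x}$, where $p_0(y_1,\ldots,y_n)=\bigvee_{I\subseteq[n]}\big(f(\widehat{\mathbf{1}}_I)\wedge\bigwedge_{i\in I}y_i\big)$; (iii) there exists a polynomial function $p\colon Y^n\to Y$ such that $f(\mathbf{x})=p(\varphi_1(x_1),\ldots,\varphi_n(x_n))$ for all $\mathbf{x}$.
   Context: $Y$ is a finite distributive lattice identified with a sublattice of $\mathcal{P}(U)$ for a finite set $U$, with least element $0=\emptyset$, greatest element $1=U$, and $\wedge,\vee$ being intersection and union; $\overline{S}=U\setminus S$. For $S\subseteq U$, $\operatorname{cl}(S)=\bigwedge\{y\in Y: y\ge S\}$, $\operatorname{int}(S)=\bigvee\{y\in Y: y\le S\}$. $[n]=\{1,\ldots,n\}$; $X_1,\ldots,X_n$ are arbitrary sets with at least two elements, each with two fixed distinct elements $0_{X_k},1_{X_k}$ (written $0,1$). For $\mathbf{x}\in\prod_i X_i$ and $a\in X_k$, $\mathbf{x}_k^a$ is $\mathbf{x}$ with $k$-th component replaced by $a$. For $I\subseteq[n]$, $\widehat{\mathbf{1}}_I$ is the tuple whose $i$-th component is $1_{X_i}$ if $i\in I$ and $0_{X_i}$ otherwise;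 an empty meet equals $1$. A map $\varphi_k\colon X_k\to Y$ satisfies the boundary condition if $\varphi_k(0_{X_k})\le\varphi_k(x_k)\le\varphi_k(1_{X_k})$ for all $x_k$. A polynomial function $Y^n\to Y$ is a composition of $\wedge,\vee$ with variables and constants. Condition (BC): $f(\mathbf{x}_k^0)\le f(\mathbf{x})\le f(\mathbf{x}_k^1)$ for all $k\in[n]$ and all $\mathbf{x}$. For $k\in[n]$, $a_k\in X_k$: $$\Phi_k^-(a_k)=\bigvee_{\mathbf{x}:\,x_k=a_k}\operatorname{cl}\big(f(\mathbf{x})\wedge\overline{f(\mathbf{x}_k^0)}\big),\qquad \Phi_k^+(a_k)=\bigwedge_{\mathbf{x}:\,x_k=a_k}\operatorname{int}\big(f(\mathbf{x})\vee\overline{f(\mathbf{x}_k^1)}\big),$$ ranging over all $\mathbf{x}$ with $k$-th component $a_k$. *)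

theory Defs
  imports "HOL-Library.FuncSet"
begin

text \<open>Y is a finite distributive lattice of subsets of the finite set U, containing
  the empty set and U and closed under intersection and union.\<close>
definition set_lattice :: "'u set \<Rightarrow> 'u set set \<Rightarrow> bool" where
  "set_lattice U Y \<longleftrightarrow> finite U \<and> Y \<subseteq> Pow U \<and> {} \<in> Y \<and> U \<in> Y \<and>
     (\<forall>a\<in>Y. \<forall>b\<in>Y. a \<inter> b \<in> Y \<and> a \<union> b \<in> Y)"

definition cl :: "'u set set \<Rightarrow> 'u set \<Rightarrow> 'u set" where
  "cl Y S = \<Inter> {y \<in> Y. S \<subseteq> y}"

definition int :: "'u set set \<Rightarrow> 'u set \<Rightarrow> 'u set" where
  "int Y S = \<Union> {y \<in> Y. y \<subseteq> S}"

inductive_set polyfun :: "'u set set \<Rightarrow> nat \<Rightarrow> ((nat \<Rightarrow> 'u set) \<Rightarrow> 'u set) set"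
  for Y :: "'u set set" and n :: nat where
  var: "i \<in> {1..n} \<Longrightarrow> (\<lambda>y. y i) \<in> polyfun Y n"
| const: "c \<in> Y \<Longrightarrow> (\<lambda>y. c) \<in> polyfun Y n"
| meet: "p \<in> polyfun Y n \<Longrightarrow> q \<in> polyfun Y n \<Longrightarrow> (\<lambda>y. p y \<inter> q y) \<in> polyfun Y n"
| join: "p \<in> polyfun Y n \<Longrightarrow> q \<in> polyfun Y n \<Longrightarrow> (\<lambda>y. p y \<union> q y) \<in> polyfun Y n"

definition hat1 :: "nat \<Rightarrow> (nat \<Rightarrow> 'x) \<Rightarrow> (nat \<Rightarrow> 'x) \<Rightarrow> nat set \<Rightarrow> (nat \<Rightarrow> 'x)" where
  "hat1 n zero one I = restrict (\<lambda>i. if i \<in> I then one i else zero i) {1..n}"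

definition BC :: "nat \<Rightarrow> (nat \<Rightarrow> 'x set) \<Rightarrow> (nat \<Rightarrow> 'x) \<Rightarrow> (nat \<Rightarrow> 'x)
    \<Rightarrow> ((nat \<Rightarrow> 'x) \<Rightarrow> 'u set) \<Rightarrow> bool" where
  "BC n X zero one f \<longleftrightarrow> (\<forall>k\<in>{1..n}. \<forall>x\<in>PiE {1..n} X.
      f (x(k := zero k)) \<subseteq> f x \<and> f x \<subseteq> f (x(k := one k)))"

definition Phi_minus :: "'u set \<Rightarrow> 'u set set \<Rightarrow> nat \<Rightarrow> (nat \<Rightarrow> 'x set) \<Rightarrow> (nat \<Rightarrow> 'x)
    \<Rightarrow> ((nat \<Rightarrow> 'x) \<Rightarrow> 'u set) \<Rightarrow> nat \<Rightarrow> 'x \<Rightarrow> 'u set" where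
  "Phi_minus U Y n X zero f k a =
     \<Union> {cl Y (f x \<inter> (U - f (x(k := zero k)))) | x. x \<in> PiE {1..n} X \<and> x k = a}"

definition Phi_plus :: "'u set \<Rightarrow> 'u set set \<Rightarrow> nat \<Rightarrow> (nat \<Rightarrow> 'x set) \<Rightarrow> (nat \<Rightarrow> 'x)
    \<Rightarrow> ((nat \<Rightarrow> 'x) \<Rightarrow> 'u set) \<Rightarrow> nat \<Rightarrow> 'x \<Rightarrow> 'u set" where
  "Phi_plus U Y n X one f k a =
     U \<inter> \<Inter> {int Y (f x \<union> (U - f (x(k := one k)))) | x. x \<in> PiE {1..n} X \<and> x k = a}"

definition p0 :: "'u set \<Rightarrow> nat \<Rightarrow> (nat \<Rightarrow> 'x) \<Rightarrow> (nat \<Rightarrow> 'x)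
    \<Rightarrow> ((nat \<Rightarrow> 'x) \<Rightarrow> 'u set) \<Rightarrow> (nat \<Rightarrow> 'u set) \<Rightarrow> 'u set" where
  "p0 U n zero one f y = (\<Union>I\<in>Pow {1..n}. f (hat1 n zero one I) \<inter> (U \<inter> (\<Inter>i\<in>I. y i)))"

end

theory Submission
  imports Defs
begin

lemma polyfun_mono_pt:
  "p \<in> polyfun Y n \<Longrightarrow> (\<forall>i\<in>{1..n}. u \<in> y i \<longrightarrow> u \<in> z i) \<Longrightarrow> u \<in> p y \<Longrightarrow> u \<in> p z"
  by (induction p rule: polyfun.induct) auto

lemma polyfun_Union:
  assumes "finite A" "\<forall>a\<in>A. g a \<in> polyfun Y n" "{} \<in> Y"
  shows "(\<lambda>y. \<Union>a\<in>A. g a y) \<in> polyfun Y n"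
  using assms
proof (induction A rule: finite_induct)
  case empty
  then show ?case using polyfun.const[of "{}" Y n] by simp
next
  case (insert a A)
  have "(\<lambda>y. \<Union>b\<in>insert a A. g b y) = (\<lambda>y. g a y \<union> (\<Union>b\<in>A. g b y))" by auto
  then show ?case using insert polyfun.join[of "g a" Y n "\<lambda>y. \<Union>b\<in>A. g b y"] by simp
qed

lemma polyfun_Inter:
  assumes "finite I" "I \<subseteq> {1..n}" "U \<in> Y"
  shows "(\<lambda>y. U \<inter> (\<Inter>i\<in>I. y i)) \<in> polyfun Y n"
  using assms
proof (induction I rule: finite_induct)
  case empty
  then show ?case using polyfun.const[of U Y n] by simp
next
  case (insert i I)
  have "(\<lambda>y. U \<inter> (\<Inter>j\<in>insert i I. y j)) = (\<lambda>y. y i \<inter> (U \<inter> (\<Inter>j\<in>I. y j)))" by auto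
  then show ?case using insert polyfun.meet[of "\<lambda>y. y i" Y n "\<lambda>y. U \<inter> (\<Inter>j\<in>I. y j)"]
      polyfun.var[of i n Y] by simp
qed

lemma cl_le: "y \<in> Y \<Longrightarrow> S \<subseteq> y \<Longrightarrow> cl Y S \<subseteq> y"
  unfolding cl_def by (rule Inter_lower) simp

lemma int_ge: "y \<in> Y \<Longrightarrow> y \<subseteq> S \<Longrightarrow> y \<subseteq> int Y S"
  unfolding int_def by (rule Union_upper) simp

theorem mainTheorem7:
  fixes U :: "'u set" and Y :: "'u set set" and n :: nat
    and X :: "nat \<Rightarrow> 'x set" and zero one :: "nat \<Rightarrow> 'x"
    and f :: "(nat \<Rightarrow> 'x) \<Rightarrow> 'u set" and \<phi> :: "nat \<Rightarrow> 'x \<Rightarrow> 'u set"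
  assumes Y: "set_lattice U Y"
    and X: "\<forall>i\<in>{1..n}. zero i \<in> X i \<and> one i \<in> X i \<and> zero i \<noteq> one i"
    and f_into: "\<forall>x\<in>PiE {1..n} X. f x \<in> Y"
    and f_BC: "BC n X zero one f"
    and phi_into: "\<forall>k\<in>{1..n}. \<forall>a\<in>X k. \<phi> k a \<in> Y"
    and phi_bc: "\<forall>k\<in>{1..n}. \<forall>a\<in>X k. \<phi> k (zero k) \<subseteq> \<phi> k a \<and> \<phi> k a \<subseteq> \<phi> k (one k)"
  shows "((\<forall>k\<in>{1..n}. \<forall>a\<in>X k.
              Phi_minus U Y n X zero f k a \<subseteq> \<phi> k a \<and> \<phi> k a \<subseteq> Phi_plus U Y n X one f k a)
          \<longleftrightarrow> (\<forall>x\<in>PiE {1..n} X. f x = p0 U n zero one f (\<lambda>i. \<phi> i (x i))))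
       \<and> ((\<forall>x\<in>PiE {1..n} X. f x = p0 U n zero one f (\<lambda>i. \<phi> i (x i)))
          \<longleftrightarrow> (\<exists>p\<in>polyfun Y n. \<forall>x\<in>PiE {1..n} X. f x = p (\<lambda>i. \<phi> i (x i))))"
proof -
  let ?P = "PiE {1..n} X"
  let ?h = "hat1 n zero one"
  have YU: "\<forall>y\<in>Y. y \<subseteq> U" and UY: "U \<in> Y" and eY: "{} \<in> Y"
    using Y unfolding set_lattice_def by auto
  have fU: "\<And>x. x \<in> ?P \<Longrightarrow> f x \<subseteq> U" using f_into YU by blast
  have upd: "\<And>x k a. x \<in> ?P \<Longrightarrow> k \<in> {1..n} \<Longrightarrow> a \<in> X k \<Longrightarrow> x(k:=a) \<in> ?P"
    by (metis PiE_fun_upd insert_absorb)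
  have hat_in: "\<And>I. ?h I \<in> ?P"
    using X unfolding hat1_def by (auto simp: PiE_iff)
  have hat_val: "\<And>I i. i \<in> {1..n} \<Longrightarrow> ?h I i = (if i \<in> I then one i else zero i)"
    unfolding hat1_def by auto
  have p0mem: "\<And>u y. u \<in> p0 U n zero one f y \<longleftrightarrow>
      u \<in> U \<and> (\<exists>I. I \<subseteq> {1..n} \<and> (\<forall>i\<in>I. u \<in> y i) \<and> u \<in> f (?h I))"
    unfolding p0_def by auto
  have BC0: "\<And>x k. x \<in> ?P \<Longrightarrow> k \<in> {1..n} \<Longrightarrow> f (x(k := zero k)) \<subseteq> f x"
    and BC1: "\<And>x k. x \<in> ?P \<Longrightarrow> k \<in> {1..n} \<Longrightarrow> f x \<subseteq> f (x(k := one k))"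
    using f_BC unfolding BC_def by auto
  have mono: "f (?h I) \<subseteq> f (?h J)" if IJ: "I \<subseteq> J" "J \<subseteq> {1..n}" for I J
  proof -
    have "finite K \<Longrightarrow> K \<subseteq> {1..n} \<Longrightarrow> f (?h I) \<subseteq> f (?h (I \<union> K))" for K
    proof (induction K rule: finite_induct)
      case empty then show ?case by simp
    next
      case (insert k K)
      have "?h (I \<union> insert k K) = (?h (I \<union> K))(k := one k)"
        using insert.prems unfolding hat1_def by (auto simp: fun_eq_iff)
      then show ?case using insert.IH insert.prems BC1[OF hat_in, of k "I \<union> K"]
        by (metis Un_insert_right insert_subset subset_trans)
    qed
    from this[of J] IJ show ?thesis by (simp add: Un_absorb1 finite_subset)
  qed
  have PhiP: "Phi_plus U Y n X one f k (z k) \<subseteq> f z \<union> (U - f (z(k:=one k)))"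
    if "z \<in> ?P" for k z
    using that unfolding Phi_plus_def int_def by blast
  have PhiM: "f z \<inter> (U - f (z(k:=zero k))) \<subseteq> Phi_minus U Y n X zero f k (z k)"
    if "z \<in> ?P" for k z
  proof -
    have "f z \<inter> (U - f (z(k:=zero k))) \<subseteq> cl Y (f z \<inter> (U - f (z(k:=zero k))))"
      unfolding cl_def by blast
    also have "\<dots> \<subseteq> Phi_minus U Y n X zero f k (z k)"
      using that unfolding Phi_minus_def by blast
    finally show ?thesis .
  qed
  have phiU: "\<And>k a. k \<in> {1..n} \<Longrightarrow> a \<in> X k \<Longrightarrow> \<phi> k a \<subseteq> U" using phi_into YU by blast
  have ii_iii: "(\<forall>x\<in>?P. f x = p0 U n zero one f (\<lambda>i. \<phi> i (x i)))
          \<longleftrightarrow> (\<exists>p\<in>polyfun Y n. \<forall>x\<in>?P. f x = p (\<lambda>i. \<phi> i (x i)))"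
  proof
    assume ii: "\<forall>x\<in>?P. f x = p0 U n zero one f (\<lambda>i. \<phi> i (x i))"
    have eq: "p0 U n zero one f = (\<lambda>y. \<Union>I\<in>Pow {1..n}. f (?h I) \<inter> (U \<inter> (\<Inter>i\<in>I. y i)))"
      by (rule ext) (simp add: p0_def)
    have "p0 U n zero one f \<in> polyfun Y n"
      unfolding eq
    proof (rule polyfun_Union[OF _ _ eY], simp, intro ballI)
      fix I assume "I \<in> Pow {1..n}"
      then have "finite I" "I \<subseteq> {1..n}" using finite_subset by auto
      then show "(\<lambda>y. f (?h I) \<inter> (U \<inter> (\<Inter>i\<in>I. y i))) \<in> polyfun Y n"
        using polyfun.meet[OF polyfun.const[of "f (?h I)" Y n] polyfun_Inter[OF _ _ UY]]
          f_into hat_in by auto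
    qed
    then show "\<exists>p\<in>polyfun Y n. \<forall>x\<in>?P. f x = p (\<lambda>i. \<phi> i (x i))" using ii by blast
  next
    assume "\<exists>p\<in>polyfun Y n. \<forall>x\<in>?P. f x = p (\<lambda>i. \<phi> i (x i))"
    then obtain p where p: "p \<in> polyfun Y n" "\<forall>x\<in>?P. f x = p (\<lambda>i. \<phi> i (x i))" by blast
    show "\<forall>x\<in>?P. f x = p0 U n zero one f (\<lambda>i. \<phi> i (x i))"
    proof (intro ballI set_eqI)
      fix x u assume x: "x \<in> ?P"
      define S where "S = {i\<in>{1..n}. u \<in> \<phi> i (x i)}"
      show "u \<in> f x \<longleftrightarrow> u \<in> p0 U n zero one f (\<lambda>i. \<phi> i (x i))"
      proof
        assume u: "u \<in> f x"
        have "u \<in> p (\<lambda>i. \<phi> i (?h S i))"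
        proof (rule polyfun_mono_pt[OF p(1) _ ])
          show "u \<in> p (\<lambda>i. \<phi> i (x i))" using u p(2) x by auto
          show "\<forall>i\<in>{1..n}. u \<in> \<phi> i (x i) \<longrightarrow> u \<in> \<phi> i (?h S i)"
          proof (intro ballI impI)
            fix i assume i: "i \<in> {1..n}" and ui: "u \<in> \<phi> i (x i)"
            have "x i \<in> X i" using x i by auto
            then have "u \<in> \<phi> i (one i)" using phi_bc i ui by blast
            moreover have "i \<in> S" using i ui unfolding S_def by auto
            ultimately show "u \<in> \<phi> i (?h S i)" using hat_val[OF i] by simp
          qed
        qed
        then have "u \<in> f (?h S)" using p(2) hat_in by auto
        then show "u \<in> p0 U n zero one f (\<lambda>i. \<phi> i (x i))"
          unfolding p0mem
          using u fU[OF x] by (intro conjI exI[of _ S]) (auto simp: S_def)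
      next
        assume "u \<in> p0 U n zero one f (\<lambda>i. \<phi> i (x i))"
        then obtain I where I: "I \<subseteq> {1..n}" "\<forall>i\<in>I. u \<in> \<phi> i (x i)" "u \<in> f (?h I)"
          unfolding p0mem by blast
        have "u \<in> p (\<lambda>i. \<phi> i (x i))"
        proof (rule polyfun_mono_pt[OF p(1) _ ])
          show "u \<in> p (\<lambda>i. \<phi> i (?h I i))" using I p(2) hat_in by auto
          show "\<forall>i\<in>{1..n}. u \<in> \<phi> i (?h I i) \<longrightarrow> u \<in> \<phi> i (x i)"
          proof (intro ballI impI)
            fix i assume i: "i \<in> {1..n}" and ui: "u \<in> \<phi> i (?h I i)"
            have xi: "x i \<in> X i" using x i by auto
            show "u \<in> \<phi> i (x i)"
            proof (cases "i \<in> I")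
              case True then show ?thesis using I(2) by blast
            next
              case False
              then have "u \<in> \<phi> i (zero i)" using ui hat_val[OF i] by simp
              then show ?thesis using phi_bc i xi by blast
            qed
          qed
        qed
        then show "u \<in> f x" using p(2) x by auto
      qed
    qed
  qed
  have i_ii: "(\<forall>k\<in>{1..n}. \<forall>a\<in>X k.
              Phi_minus U Y n X zero f k a \<subseteq> \<phi> k a \<and> \<phi> k a \<subseteq> Phi_plus U Y n X one f k a)
          \<longleftrightarrow> (\<forall>x\<in>?P. f x = p0 U n zero one f (\<lambda>i. \<phi> i (x i)))"
  proof
    assume i: "\<forall>k\<in>{1..n}. \<forall>a\<in>X k.
              Phi_minus U Y n X zero f k a \<subseteq> \<phi> k a \<and> \<phi> k a \<subseteq> Phi_plus U Y n X one f k a"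
    show "\<forall>x\<in>?P. f x = p0 U n zero one f (\<lambda>i. \<phi> i (x i))"
    proof (intro ballI set_eqI)
      fix x u assume x: "x \<in> ?P"
      define S where "S = {i\<in>{1..n}. u \<in> \<phi> i (x i)}"
      define yK where "yK K = (\<lambda>i. if i \<in> K then (if u \<in> \<phi> i (x i) then one i else zero i) else x i)" for K
      have chain: "finite K \<Longrightarrow> K \<subseteq> {1..n} \<Longrightarrow> yK K \<in> ?P \<and> (u \<in> f (yK K) \<longleftrightarrow> u \<in> f x)" for K
      proof (induction K rule: finite_induct)
        case empty then show ?case using x by (simp add: yK_def)
      next
        case (insert k K)
        let ?z = "yK K"
        have z: "?z \<in> ?P" and zu: "u \<in> f ?z \<longleftrightarrow> u \<in> f x" using insert by auto
        have k: "k \<in> {1..n}" using insert by auto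
        have zk: "?z k = x k" using insert.hyps unfolding yK_def by auto
        have xk: "x k \<in> X k" using x k by auto
        show ?case
        proof (cases "u \<in> \<phi> k (x k)")
          case True
          have e: "yK (insert k K) = ?z(k := one k)" using True unfolding yK_def by (auto simp: fun_eq_iff)
          have "u \<in> f ?z \<longleftrightarrow> u \<in> f (?z(k := one k))"
          proof -
            have "u \<in> Phi_plus U Y n X one f k (x k)" using i k xk True by blast
            then show ?thesis using BC1[OF z k] PhiP[OF z, of k] zk by auto
          qed
          moreover have "one k \<in> X k" using X k by auto
          ultimately show ?thesis unfolding e using zu upd[OF z k, of "one k"] by blast
        next
          case False
          have e: "yK (insert k K) = ?z(k := zero k)" using False unfolding yK_def by (auto simp: fun_eq_iff)
          have "u \<in> f ?z \<longleftrightarrow> u \<in> f (?z(k := zero k))"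
          proof -
            have "Phi_minus U Y n X zero f k (x k) \<subseteq> \<phi> k (x k)" using i k xk by blast
            then show ?thesis using BC0[OF z k] PhiM[OF z, of k] zk False fU[OF z] by auto
          qed
          moreover have "zero k \<in> X k" using X k by auto
          ultimately show ?thesis unfolding e using zu upd[OF z k, of "zero k"] by blast
        qed
      qed
      have "yK {1..n} = ?h S"
      proof (rule ext)
        fix i show "yK {1..n} i = ?h S i"
        proof (cases "i \<in> {1..n}")
          case True then show ?thesis using hat_val[OF True] by (simp add: yK_def S_def)
        next
          case False
          then have "x i = undefined" using x by (simp add: PiE_def extensional_def)
          moreover have "i \<notin> {1..n}" by fact
          ultimately show ?thesis unfolding yK_def hat1_def restrict_def by auto
        qed
      qed
      moreover have "u \<in> f (yK {1..n}) \<longleftrightarrow> u \<in> f x" using chain[of "{1..n}"] by simp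
      ultimately have fxS: "u \<in> f x \<longleftrightarrow> u \<in> f (?h S)" by simp
      show "u \<in> f x \<longleftrightarrow> u \<in> p0 U n zero one f (\<lambda>i. \<phi> i (x i))"
      proof
        assume "u \<in> f x"
        then show "u \<in> p0 U n zero one f (\<lambda>i. \<phi> i (x i))"
          unfolding p0mem
          using fxS fU[OF x] \<open>u \<in> f x\<close> by (intro conjI exI[of _ S]) (auto simp: S_def)
      next
        assume "u \<in> p0 U n zero one f (\<lambda>i. \<phi> i (x i))"
        then obtain I where I: "I \<subseteq> {1..n}" "\<forall>i\<in>I. u \<in> \<phi> i (x i)" "u \<in> f (?h I)"
          unfolding p0mem by blast
        have "I \<subseteq> S" using I unfolding S_def by auto
        moreover have "S \<subseteq> {1..n}" unfolding S_def by auto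
        ultimately have "u \<in> f (?h S)" using mono[of I S] I(3) by blast
        then show "u \<in> f x" using fxS by auto
      qed
    qed
  next
    assume ii: "\<forall>x\<in>?P. f x = p0 U n zero one f (\<lambda>i. \<phi> i (x i))"
    show "\<forall>k\<in>{1..n}. \<forall>a\<in>X k.
              Phi_minus U Y n X zero f k a \<subseteq> \<phi> k a \<and> \<phi> k a \<subseteq> Phi_plus U Y n X one f k a"
    proof (intro ballI conjI)
      fix k a assume k: "k \<in> {1..n}" and a: "a \<in> X k"
      have fk: "\<phi> k a \<in> Y" using phi_into k a by auto
      have A: "f x \<inter> (U - f (x(k := zero k))) \<subseteq> \<phi> k a" if x: "x \<in> ?P" "x k = a" for x
      proof
        fix u assume u: "u \<in> f x \<inter> (U - f (x(k := zero k)))"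
        show "u \<in> \<phi> k a"
        proof (rule ccontr)
          assume nu: "u \<notin> \<phi> k a"
          have x0: "x(k := zero k) \<in> ?P" using upd x k X by auto
          have "u \<in> p0 U n zero one f (\<lambda>i. \<phi> i (x i))" using u bspec[OF ii x(1)] by simp
          then obtain I where I: "I \<subseteq> {1..n}" "\<forall>i\<in>I. u \<in> \<phi> i (x i)" "u \<in> f (?h I)"
            unfolding p0mem by blast
          have "k \<notin> I" using I(2) nu x by auto
          then have "u \<in> p0 U n zero one f (\<lambda>i. \<phi> i ((x(k := zero k)) i))"
            unfolding p0mem using I u by auto
          then show False using bspec[OF ii x0] u by simp
        qed
      qed
      show "Phi_minus U Y n X zero f k a \<subseteq> \<phi> k a"
        unfolding Phi_minus_def
      proof (rule Union_least)
        fix T assume "T \<in> {cl Y (f x \<inter> (U - f (x(k := zero k)))) |x. x \<in> ?P \<and> x k = a}"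
        then obtain x where "x \<in> ?P" "x k = a" "T = cl Y (f x \<inter> (U - f (x(k := zero k))))" by blast
        then show "T \<subseteq> \<phi> k a" using cl_le[OF fk A] by simp
      qed
      have B: "\<phi> k a \<subseteq> f x \<union> (U - f (x(k := one k)))" if x: "x \<in> ?P" "x k = a" for x
      proof
        fix u assume u: "u \<in> \<phi> k a"
        show "u \<in> f x \<union> (U - f (x(k := one k)))"
        proof (cases "u \<in> f (x(k := one k))")
          case True
          have x1: "x(k := one k) \<in> ?P" using upd x k X by auto
          have "u \<in> p0 U n zero one f (\<lambda>i. \<phi> i ((x(k := one k)) i))" using True bspec[OF ii x1] by simp
          then obtain I where I: "I \<subseteq> {1..n}" "\<forall>i\<in>I. u \<in> \<phi> i ((x(k := one k)) i)" "u \<in> f (?h I)"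
            unfolding p0mem by blast
          have "\<forall>i\<in>I. u \<in> \<phi> i (x i)" 
          proof
            fix i assume "i \<in> I"
            then show "u \<in> \<phi> i (x i)" using I(2) u x(2) by (cases "i = k") auto
          qed
          then have "u \<in> p0 U n zero one f (\<lambda>i. \<phi> i (x i))"
            unfolding p0mem using I phiU[OF k a] u by auto
          then show ?thesis using bspec[OF ii x(1)] by simp
        next
          case False
          then show ?thesis using u phiU[OF k a] by auto
        qed
      qed
      show "\<phi> k a \<subseteq> Phi_plus U Y n X one f k a"
        unfolding Phi_plus_def
      proof (intro Int_greatest Inter_greatest phiU[OF k a])
        fix T assume "T \<in> {int Y (f x \<union> (U - f (x(k := one k)))) |x. x \<in> ?P \<and> x k = a}"
        then obtain x where "x \<in> ?P" "x k = a" "T = int Y (f x \<union> (U - f (x(k := one k))))" by blast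
        then show "\<phi> k a \<subseteq> T" using int_ge[OF fk B] by simp
      qed
    qed
  qed
  show ?thesis using i_ii ii_iii by blast
qed

end
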